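(* Let $\varphi:\mathbb B\to\mathbb B$ be a slice regular function with $\varphi(0)=0$. Then the operators $C_\varphi f=f^{\odot}\varphi$ and $D_\varphi f=f_{\odot}\varphi$ are bounded on $H^2(\mathbb B)$ and $\|C_\varphi\|=\|D_\varphi\|=1$.
   Context: $\mathbb H$ quaternions, $\mathbb S=\{q:q^2=-1\}$, $\mathbb C_I=\mathbb R+I\mathbb R$, $\mathbb B$ the open unit ball of $\mathbb H$. A function on a domain $\Omega$ is slice regular if on each $\Omega\cap\mathbb C_I$ it is $C^1$ and annihilated by $\frac12(\partial_x+I\partial_y)$; regular functions on $\mathbb B$ are exactly convergent power series $\sum_n q^na_n$. The $\ast$-product of power series is $\big(\sum q^na_n\big)\ast\big(\sum q^nb_n\big)=\sum_n q^n\sum_{k=0}^na_kb_{n-k}$, $\varphi^{\ast0}=1$, $\varphi^{\ast n}=\varphi\ast\varphi^{\ast(n-1)}$. For $f(q)=\sum q^na_n$ regular on $\mathbb B$ and $\varphi:\mathbb B\to\mathbb B$ regular: $f^{\odot}\varphi=\sum_n\varphi^{\ast n}a_n$, $f_{\odot}\varphi=\sum_n a_n\ast\varphi^{\ast n}$. $H^2(\mathbb B)$ is the space of regular $f=\sum q^na_n$ on $\mathbb B$ with $\|f\|_2^2=\sum|a_n|^2<\infty$ (equivalently $\|f\|_2=\sup_{I\in\mathbb S}\lim_{r\to1^-}(\frac1{2\pi}\int_{-\pi}^\pi|f(re^{I\theta})|^2d\theta)^{1/2}$). Operator norm: $\|T\|=\sup\{\|Tf\|_2:\|f\|_2\le1\}$.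 *)

theory Defs
  imports "HOL-Analysis.Analysis"
begin

(* Quaternions H modelled via Cayley-Dickson as pairs (z, w) of complex numbers,
   q = z + w j (z, w in C = R + iR).  The product-type norm is
   sqrt(|z|^2 + |w|^2), i.e. the Euclidean norm of R^4, so topology,
   summability and the open unit ball come from the library. *)
type_synonym quat = "complex \<times> complex"

definition qmul :: "quat \<Rightarrow> quat \<Rightarrow> quat" where
  "qmul p q = (fst p * fst q - snd p * cnj (snd q), fst p * snd q + snd p * cnj (fst q))"

definition qone :: quat where "qone = (1, 0)"

primrec qpow :: "quat \<Rightarrow> nat \<Rightarrow> quat" where
  "qpow q 0 = qone"
| "qpow q (Suc n) = qmul q (qpow q n)"

definition qball :: "quat set" where "qball = ball 0 1"

definition ps :: "(nat \<Rightarrow> quat) \<Rightarrow> quat \<Rightarrow> quat" where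
  "ps a q = (\<Sum>n. qmul (qpow q n) (a n))"

definition ps_rep :: "(quat \<Rightarrow> quat) \<Rightarrow> (nat \<Rightarrow> quat) \<Rightarrow> bool" where
  "ps_rep g a \<longleftrightarrow> (\<forall>q\<in>qball. summable (\<lambda>n. qmul (qpow q n) (a n)) \<and> g q = ps a q)"

(* slice regular functions on B = convergent power series on B *)
definition regular_B :: "(quat \<Rightarrow> quat) \<Rightarrow> bool" where
  "regular_B g \<longleftrightarrow> (\<exists>a. ps_rep g a)"

definition coeffs :: "(quat \<Rightarrow> quat) \<Rightarrow> nat \<Rightarrow> quat" where
  "coeffs g = (SOME a. ps_rep g a)"

definition in_H2 :: "(quat \<Rightarrow> quat) \<Rightarrow> bool" where
  "in_H2 g \<longleftrightarrow> regular_B g \<and> summable (\<lambda>n. (norm (coeffs g n))\<^sup>2)"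

definition H2norm :: "(quat \<Rightarrow> quat) \<Rightarrow> real" where
  "H2norm g = sqrt (\<Sum>n. (norm (coeffs g n))\<^sup>2)"

definition sprod :: "(nat \<Rightarrow> quat) \<Rightarrow> (nat \<Rightarrow> quat) \<Rightarrow> nat \<Rightarrow> quat" where
  "sprod a b n = (\<Sum>k\<le>n. qmul (a k) (b (n - k)))"

primrec spow :: "(nat \<Rightarrow> quat) \<Rightarrow> nat \<Rightarrow> nat \<Rightarrow> quat" where
  "spow b 0 = (\<lambda>m. if m = 0 then qone else 0)"
| "spow b (Suc n) = sprod b (spow b n)"

(* f^odot phi = sum_n phi^{*n} a_n *)
definition Cop :: "(quat \<Rightarrow> quat) \<Rightarrow> (quat \<Rightarrow> quat) \<Rightarrow> quat \<Rightarrow> quat" where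
  "Cop \<phi> f q = (\<Sum>n. qmul (ps (spow (coeffs \<phi>) n) q) (coeffs f n))"

(* f_odot phi = sum_n a_n * phi^{*n} *)
definition Dop :: "(quat \<Rightarrow> quat) \<Rightarrow> (quat \<Rightarrow> quat) \<Rightarrow> quat \<Rightarrow> quat" where
  "Dop \<phi> f q = (\<Sum>n. ps (\<lambda>m. qmul (coeffs f n) (spow (coeffs \<phi>) n m)) q)"

definition bounded_H2 :: "((quat \<Rightarrow> quat) \<Rightarrow> quat \<Rightarrow> quat) \<Rightarrow> bool" where
  "bounded_H2 T \<longleftrightarrow> (\<forall>f. in_H2 f \<longrightarrow> in_H2 (T f)) \<and>
     (\<exists>M. \<forall>f. in_H2 f \<longrightarrow> H2norm (T f) \<le> M * H2norm f)"

definition opnorm_H2 :: "((quat \<Rightarrow> quat) \<Rightarrow> quat \<Rightarrow> quat) \<Rightarrow> real" where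
  "opnorm_H2 T = Sup {H2norm (T f) | f. in_H2 f \<and> H2norm f \<le> 1}"

end

theory Submission
  imports Defs
begin

lemma norm_quat_sq: "(norm (x::quat))^2 = (cmod (fst x))^2 + (cmod (snd x))^2"
  by (cases x) (simp add: norm_Pair)

lemma cx_id: "(cmod (x*y - z*cnj w))^2 + (cmod (x*w + z*cnj y))^2 = ((cmod x)^2 + (cmod z)^2)*((cmod y)^2+(cmod w)^2)"
  unfolding cmod_power2 by (simp add: power2_eq_square algebra_simps)

lemma qmul_norm: "norm (qmul p q) = norm p * norm q"
proof -
  have "(norm (qmul p q))^2 = (norm p * norm q)^2"
    unfolding power_mult_distrib norm_quat_sq qmul_def using cx_id by simp
  then show ?thesis by (simp add: power2_eq_iff_nonneg)
qed

lemma qmul_assoc: "qmul (qmul p q) r = qmul p (qmul q r)"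
  unfolding qmul_def by (simp add: algebra_simps)

lemma qmul_add_left: "qmul (p + q) r = qmul p r + qmul q r"
  unfolding qmul_def by (simp add: algebra_simps)
lemma qmul_add_right: "qmul r (p + q) = qmul r p + qmul r q"
  unfolding qmul_def by (simp add: algebra_simps)
lemma qmul_zero_left[simp]: "qmul 0 q = 0"
  unfolding qmul_def by (simp add: zero_prod_def)
lemma qmul_zero_right[simp]: "qmul q 0 = 0"
  unfolding qmul_def by (simp add: zero_prod_def)
lemma qmul_one_left[simp]: "qmul qone q = q"
  unfolding qmul_def qone_def by simp
lemma qmul_one_right[simp]: "qmul q qone = q"
  unfolding qmul_def qone_def by simp
lemma qmul_scaleR_left: "qmul (c *\<^sub>R p) q = c *\<^sub>R qmul p q"
  unfolding qmul_def by (simp add: algebra_simps scaleR_conv_of_real)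
lemma qmul_scaleR_right: "qmul p (c *\<^sub>R q) = c *\<^sub>R qmul p q"
  unfolding qmul_def by (simp add: algebra_simps scaleR_conv_of_real)

lemma bl_qmul_left: "bounded_linear (\<lambda>x. qmul x p)"
  by (rule bounded_linear_intro[where K="norm p"])
     (auto simp: qmul_add_left qmul_scaleR_left qmul_norm)
lemma bl_qmul_right: "bounded_linear (\<lambda>x. qmul p x)"
  by (rule bounded_linear_intro[where K="norm p"])
     (auto simp: qmul_add_right qmul_scaleR_right qmul_norm mult.commute)

lemma qmul_sum_left: "qmul (\<Sum>i\<in>A. f i) q = (\<Sum>i\<in>A. qmul (f i) q)"
  by (induct A rule: infinite_finite_induct) (auto simp: qmul_add_left)
lemma qmul_sum_right: "qmul q (\<Sum>i\<in>A. f i) = (\<Sum>i\<in>A. qmul q (f i))"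
  by (induct A rule: infinite_finite_induct) (auto simp: qmul_add_right)

lemma norm_qone[simp]: "norm qone = 1"
  by (simp add: qone_def norm_Pair)

definition smul :: "complex \<Rightarrow> quat \<Rightarrow> quat" where
  "smul c x = (c * fst x, c * snd x)"

lemma smul_norm: "norm (smul c x) = cmod c * norm x"
proof -
  have "(norm (smul c x))^2 = (cmod c * norm x)^2"
    unfolding norm_quat_sq power_mult_distrib smul_def by (simp add: norm_mult algebra_simps power_mult_distrib)
  then show ?thesis by (simp add: power2_eq_iff_nonneg)
qed

lemma smul_add: "smul c (x + y) = smul c x + smul c y"
  unfolding smul_def by (simp add: algebra_simps)
lemma smul_zero[simp]: "smul c 0 = 0" unfolding smul_def by (simp add: zero_prod_def)
lemma smul_zero_left[simp]: "smul 0 x = 0" unfolding smul_def by (simp add: zero_prod_def)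
lemma smul_one[simp]: "smul 1 x = x" unfolding smul_def by simp
lemma smul_smul: "smul a (smul b x) = smul (a*b) x" unfolding smul_def by simp
lemma smul_sum: "smul c (\<Sum>i\<in>A. f i) = (\<Sum>i\<in>A. smul c (f i))"
  by (induct A rule: infinite_finite_induct) (auto simp: smul_add)
lemma smul_sum_left: "smul (\<Sum>i\<in>A. f i) x = (\<Sum>i\<in>A. smul (f i) x)"
  by (simp add: smul_def prod_eq_iff fst_sum snd_sum sum_distrib_right)
lemma fst_smul[simp]: "fst (smul c x) = c * fst x" unfolding smul_def by simp
lemma snd_smul[simp]: "snd (smul c x) = c * snd x" unfolding smul_def by simp
lemma qmul_smul_left: "qmul (smul c w) x = smul c (qmul w x)"
  unfolding smul_def qmul_def by (simp add: algebra_simps)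
lemma bl_smul: "bounded_linear (smul c)"
  by (rule bounded_linear_intro[where K="cmod c"])
     (auto simp: smul_add smul_norm, simp add: smul_def scaleR_conv_of_real algebra_simps)

definition mv :: "quat \<Rightarrow> quat \<Rightarrow> quat" where
  "mv x u = (fst x * fst u + snd x * snd u, - cnj (snd x) * fst u + cnj (fst x) * snd u)"

lemma mv_norm: "norm (mv x u) = norm x * norm u"
proof -
  have "(norm (mv x u))^2 = (norm x * norm u)^2"
    unfolding norm_quat_sq power_mult_distrib mv_def cmod_power2 by (simp add: power2_eq_square algebra_simps)
  then show ?thesis by (simp add: power2_eq_iff_nonneg)
qed
lemma mv_add: "mv x (u + v) = mv x u + mv x v"
  unfolding mv_def by (simp add: algebra_simps)
lemma mv_smul: "mv x (smul c u) = smul c (mv x u)"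
  unfolding mv_def smul_def by (simp add: algebra_simps)

definition qcol :: "quat \<Rightarrow> quat" where "qcol x = (fst x, - cnj (snd x))"
lemma qcol_norm[simp]: "norm (qcol x) = norm x"
  unfolding qcol_def by (cases x) (simp add: norm_Pair)
lemma qcol_add: "qcol (x + y) = qcol x + qcol y" unfolding qcol_def by simp
lemma qcol_zero[simp]: "qcol 0 = 0" unfolding qcol_def by (simp add: zero_prod_def)
lemma qcol_sum: "qcol (\<Sum>i\<in>A. f i) = (\<Sum>i\<in>A. qcol (f i))"
  by (induct A rule: infinite_finite_induct) (auto simp: qcol_add)
lemma qcol_qmul: "qcol (qmul x y) = mv x (qcol y)"
  unfolding qcol_def qmul_def mv_def by (simp add: algebra_simps)

definition dot :: "quat \<Rightarrow> quat \<Rightarrow> complex" where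
  "dot u v = fst u * fst v + snd u * snd v"

lemma dot_qmul_mv: "dot (qmul w x) u = dot w (mv x u)"
  unfolding dot_def qmul_def mv_def by (simp add: algebra_simps)
lemma dot_smul_left: "dot (smul c v) u = c * dot v u"
  unfolding dot_def smul_def by (simp add: algebra_simps)
lemma dot_smul_right: "dot v (smul c u) = c * dot v u"
  unfolding dot_def smul_def by (simp add: algebra_simps)

lemma cs2: "\<bar>a*c + b*d\<bar> \<le> sqrt (a^2+b^2) * sqrt (c^2+d^2)" for a b c d :: real
proof -
  have "(a*c+b*d)^2 \<le> (a^2+b^2)*(c^2+d^2)"
  proof -
    have h: "0 \<le> (a*d - b*c)^2" by simp
    show ?thesis using h unfolding power2_eq_square by (simp add: algebra_simps)
  qed
  then have "sqrt ((a*c+b*d)^2) \<le> sqrt ((a^2+b^2)*(c^2+d^2))" by (rule real_sqrt_le_mono)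
  then show ?thesis by (simp add: real_sqrt_mult)
qed

lemma dot_norm: "cmod (dot v u) \<le> norm v * norm u"
proof -
  have "cmod (dot v u) \<le> cmod (fst v) * cmod (fst u) + cmod (snd v) * cmod (snd u)"
    unfolding dot_def by (metis norm_mult norm_triangle_ineq)
  also have "\<dots> \<le> sqrt ((cmod (fst v))^2 + (cmod (snd v))^2) * sqrt ((cmod (fst u))^2 + (cmod (snd u))^2)"
    using cs2 by (meson abs_le_D1)
  also have "\<dots> = norm v * norm u"
    by (simp add: norm_quat_sq[symmetric])
  finally show ?thesis .
qed

definition qc :: "quat \<Rightarrow> quat" where "qc v = (cnj (fst v), cnj (snd v))"
lemma dot_qc: "dot (qc v) v = of_real ((norm v)^2)"
  unfolding dot_def qc_def norm_quat_sq of_real_add complex_norm_square by (simp add: mult.commute)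
lemma qc_norm[simp]: "norm (qc v) = norm v"
  unfolding qc_def by (cases v) (simp add: norm_Pair)

lemma bl_dot_right: "bounded_linear (\<lambda>u. dot w u)"
  by (rule bounded_linear_intro[where K="norm w"])
     (auto simp: dot_def algebra_simps scaleR_conv_of_real dot_norm[unfolded dot_def])
lemma bl_dot_left: "bounded_linear (\<lambda>w. dot w u)"
  by (rule bounded_linear_intro[where K="norm u"])
     (auto simp: dot_def algebra_simps scaleR_conv_of_real dot_norm[unfolded dot_def])

lemma root_sum:
  fixes M j l :: nat
  assumes M: "M > 0" and j: "j < M" and l: "l < M"
  defines "w \<equiv> cis (2*pi/M)"
  shows "(\<Sum>k<M. (w^j * cnj (w^l))^k) = (if j = l then of_nat M else 0)"
proof -
  define x where "x = w^j * cnj (w^l)"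
  have "x = cis (real j * (2*pi/M)) * cnj (cis (real l * (2*pi/M)))"
    by (simp only: x_def w_def Complex.DeMoivre)
  also have "\<dots> = cis (real j * (2*pi/M) + - (real l * (2*pi/M)))"
    by (simp only: cis_cnj cis_mult)
  also have "\<dots> = cis (2*pi*(real j - real l)/M)"
    by (rule arg_cong[where f=cis]) (use M in \<open>simp add: field_simps\<close>)
  finally have x: "x = cis (2*pi*(real j - real l)/M)" .
  show ?thesis
  proof (cases "j = l")
    case True
    then have "x = 1" using x by simp
    then show ?thesis using True x_def by simp
  next
    case False
    have wM: "w^M = 1" using M by (simp add: w_def Complex.DeMoivre)
    have "x^M = (w^M)^j * cnj ((w^M)^l)"
      unfolding x_def by (simp add: power_mult_distrib power_mult[symmetric] mult.commute)
    then have xM: "x^M = 1" using wM by simp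
    have "x \<noteq> 1"
    proof
      assume "x = 1"
      then have "exp (\<i> * complex_of_real (2 * pi * (real j - real l) / real M)) = 1"
        using x by (simp add: cis_conv_exp)
      then obtain n :: int where n: "2 * pi * (real j - real l) / real M = of_int (2*n) * pi"
        by (auto simp: exp_eq_1)
      then have "(2*pi) * (real j - real l) = (2*pi) * (of_int n * real M)" using M by (simp add: field_simps)
      then have "real j - real l = of_int n * real M" by (subst (asm) mult_left_cancel) auto
      then have "real_of_int (int j - int l) = real_of_int (n * int M)" by simp
      then have eq: "int j - int l = n * int M" by (simp only: of_int_eq_iff)
      have "\<bar>int j - int l\<bar> < int M" using j l by auto
      then have "\<bar>n\<bar> * int M < 1 * int M" using eq by (simp add: abs_mult)
      then have "\<bar>n\<bar> < 1" by (rule mult_right_less_imp_less) simp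
      then have "n = 0" by simp
      then show False using False eq by simp
    qed
    then show ?thesis using False xM unfolding x_def[symmetric] by (simp add: sum_gp_strict)
  qed
qed

lemma sum_swap3: "(\<Sum>k\<in>A. \<Sum>j\<in>B. \<Sum>l\<in>C. F j l k) = (\<Sum>j\<in>B. \<Sum>l\<in>C. \<Sum>k\<in>A. F j l k)"
proof -
  have "(\<Sum>k\<in>A. \<Sum>j\<in>B. \<Sum>l\<in>C. F j l k) = (\<Sum>j\<in>B. \<Sum>k\<in>A. \<Sum>l\<in>C. F j l k)"
    by (rule sum.swap)
  also have "\<dots> = (\<Sum>j\<in>B. \<Sum>l\<in>C. \<Sum>k\<in>A. F j l k)"
    by (rule sum.cong[OF refl], rule sum.swap)
  finally show ?thesis .
qed

lemma cpars:
  fixes M :: nat and c :: "nat \<Rightarrow> complex" and r :: real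
  assumes M: "M > 0"
  defines "w \<equiv> cis (2*pi/M)"
  shows "(\<Sum>k<M. (cmod (\<Sum>j<M. c j * (of_real r * w^k)^j))^2)
         = real M * (\<Sum>j<M. (cmod (c j))^2 * r^(2*j))"
proof -
  have "complex_of_real (\<Sum>k<M. (cmod (\<Sum>j<M. c j * (of_real r * w^k)^j))^2)
     = (\<Sum>k<M. (\<Sum>j<M. c j * (of_real r * w^k)^j) * cnj (\<Sum>l<M. c l * (of_real r * w^k)^l))"
    by (simp only: of_real_sum complex_norm_square)
  also have "\<dots> = (\<Sum>k<M. \<Sum>j<M. \<Sum>l<M. (c j * cnj (c l) * of_real (r^(j+l))) * (w^j * cnj (w^l))^k)"
    apply (simp add: sum_distrib_left sum_distrib_right cnj_sum power_mult_distrib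
        power_add algebra_simps flip: power_mult)
    apply (rule sum.cong[OF refl])
    apply (subst sum.swap)
    apply (simp only: mult.left_commute)
    done
  also have "\<dots> = (\<Sum>j<M. \<Sum>l<M. (c j * cnj (c l) * of_real (r^(j+l))) * (\<Sum>k<M. (w^j * cnj (w^l))^k))"
    by (subst sum_swap3) (simp only: sum_distrib_left)
  also have "\<dots> = (\<Sum>j<M. \<Sum>l<M. (c j * cnj (c l) * of_real (r^(j+l))) * (if j = l then of_nat M else 0))"
    using root_sum[OF M] unfolding w_def by (intro sum.cong refl) simp
  also have "\<dots> = (\<Sum>j<M. c j * cnj (c j) * of_real (r^(2*j)) * of_nat M)"
    by (simp add: if_distrib mult_2 cong: if_cong)
  also have "\<dots> = (\<Sum>j<M. of_real ((cmod (c j))^2) * of_real (r^(2*j)) * of_nat M)"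
    by (simp only: complex_norm_square)
  also have "\<dots> = complex_of_real (real M * (\<Sum>j<M. (cmod (c j))^2 * r^(2*j)))"
    by (simp add: sum_distrib_left mult_ac)
  finally show ?thesis using of_real_eq_iff by blast
qed

lemma qpars:
  fixes M :: nat and V :: "nat \<Rightarrow> quat" and r :: real
  assumes M: "M > 0"
  defines "w \<equiv> cis (2*pi/M)"
  shows "(\<Sum>k<M. (norm (\<Sum>j<M. smul ((of_real r * w^k)^j) (V j)))^2)
         = real M * (\<Sum>j<M. (norm (V j))^2 * r^(2*j))"
proof -
  have "(\<Sum>k<M. (norm (\<Sum>j<M. smul ((of_real r * w^k)^j) (V j)))^2)
     = (\<Sum>k<M. (cmod (\<Sum>j<M. fst (V j) * (of_real r * w^k)^j))^2)
     + (\<Sum>k<M. (cmod (\<Sum>j<M. snd (V j) * (of_real r * w^k)^j))^2)"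
    by (simp add: norm_quat_sq fst_sum snd_sum sum.distrib mult.commute)
  also have "\<dots> = real M * (\<Sum>j<M. (cmod (fst (V j)))^2 * r^(2*j))
                 + real M * (\<Sum>j<M. (cmod (snd (V j)))^2 * r^(2*j))"
    using cpars[OF M, of "\<lambda>j. fst (V j)" r] cpars[OF M, of "\<lambda>j. snd (V j)" r]
    unfolding w_def by simp
  also have "\<dots> = real M * (\<Sum>j<M. (norm (V j))^2 * r^(2*j))"
    by (simp add: norm_quat_sq sum.distrib algebra_simps)
  finally show ?thesis .
qed

lemma G_main:
  fixes T :: "nat \<Rightarrow> quat \<Rightarrow> quat" and \<beta> :: "nat \<Rightarrow> real" and p :: "nat \<Rightarrow> quat"
  assumes Tadd: "\<And>k u v. T k (u + v) = T k u + T k v"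
    and Tsmul: "\<And>k c u. T k (smul c u) = smul c (T k u)"
    and Tbnd: "\<And>k u. norm (T k u) \<le> \<beta> k * norm u"
    and bsum: "\<And>r. 0 \<le> r \<Longrightarrow> r < 1 \<Longrightarrow> summable (\<lambda>k. \<beta> k * r^k)"
    and KL: "\<And>z u. cmod z < 1 \<Longrightarrow> norm (\<Sum>k. smul (z^k) (T k u)) \<le> norm u"
    and fin: "\<And>l. d \<le> l \<Longrightarrow> p l = 0"
  shows "(\<Sum>j<N. (norm (\<Sum>k\<le>j. T k (p (j-k))))^2) \<le> (\<Sum>l<d. (norm (p l))^2)"
proof -
  have T0: "T k 0 = 0" for k using Tsmul[of k 0 0] by simp
  have Tsum: "T k (\<Sum>i\<in>A. f i) = (\<Sum>i\<in>A. T k (f i))" for k A f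
    by (induct A rule: infinite_finite_induct) (auto simp: T0 Tadd)
  have bpos: "0 \<le> \<beta> k" for k using order_trans[OF norm_ge_zero Tbnd[of k qone]] by simp
  define S where "S = (\<Sum>l<d. (norm (p l))^2)"
  define orig where "orig j = (\<Sum>k\<le>j. T k (p (j-k)))" for j
  define X where "X r = (\<Sum>j<N. r^(2*j) * (norm (orig j))^2)" for r :: real
  have S0: "0 \<le> S" unfolding S_def by (simp add: sum_nonneg)
  have A: "X r \<le> S" if r0: "0 < r" and r1: "r < 1" for r
  proof -
    define eps where "eps L = (\<Sum>n. \<beta> (n+L) * r^(n+L))" for L
    have sumr: "summable (\<lambda>k. \<beta> k * r^k)" using bsum r0 r1 by simp
    have eps0: "eps \<longlonglongrightarrow> 0" unfolding eps_def by (rule suminf_exist_split2[OF sumr])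
    have epspos: "0 \<le> eps L" for L unfolding eps_def
      using r0 bpos by (intro suminf_nonneg summable_ignore_initial_segment[OF sumr]) auto
    have main: "X r \<le> (1 + eps L)^2 * S" if L1: "1 \<le> L" and LN: "N \<le> L" for L
    proof -
      define M where "M = L + d"
      have M: "M > 0" using L1 M_def by simp
      define w where "w = cis (2*pi/M)"
      define Q where "Q j = (\<Sum>k\<le>j. (if k < L then T k (p (j-k)) else 0))" for j
      define Pz where "Pz z = (\<Sum>l<M. smul (z^l) (p l))" for z
      define TL where "TL z u = (\<Sum>k<L. smul (z^k) (T k u))" for z u
      have gen: "(\<Sum>j<M. smul (z^j) (Q j)) = TL z (Pz z)" for z
      proof -
        define g where "g i j = smul (z^(i+j)) (if i < L then T i (p j) else 0)" for i j
        have "(\<Sum>j<M. smul (z^j) (Q j)) = (\<Sum>j<M. \<Sum>i\<le>j. g i (j - i))"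
          unfolding Q_def g_def by (auto simp: smul_sum intro!: sum.cong)
        also have "\<dots> = (\<Sum>(i,j)\<in>{(i,j). i+j < M}. g i j)"
          by (rule sum.triangle_reindex[symmetric])
        also have "\<dots> = (\<Sum>(i,j)\<in>{..<L}\<times>{..<d}. g i j)"
        proof (rule sum.mono_neutral_right)
          show "finite {(i, j). i + j < M}"
            by (rule finite_subset[of _ "{..<M}\<times>{..<M}"]) auto
          show "{..<L} \<times> {..<d} \<subseteq> {(i, j). i + j < M}" using M_def by auto
          show "\<forall>i\<in>{(i, j). i + j < M} - {..<L} \<times> {..<d}. (case i of (i, j) \<Rightarrow> g i j) = 0"
          proof (intro ballI)
            fix x assume "x \<in> {(i, j). i + j < M} - {..<L} \<times> {..<d}"
            then obtain i j where x: "x = (i,j)" and nij: "\<not> (i < L \<and> j < d)" by auto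
            show "(case x of (i, j) \<Rightarrow> g i j) = 0"
              using fin[of j] nij by (cases "i < L") (auto simp: x g_def T0)
          qed
        qed
        also have "\<dots> = (\<Sum>i<L. \<Sum>j<d. g i j)" by (simp add: sum.cartesian_product)
        also have "\<dots> = (\<Sum>i<L. \<Sum>j<M. g i j)"
          using M_def fin by (intro sum.cong refl sum.mono_neutral_left) (auto simp: g_def T0)
        also have "\<dots> = TL z (Pz z)"
          unfolding TL_def Pz_def g_def
          by (auto simp: Tsum Tsmul smul_sum smul_smul power_add intro!: sum.cong)
        finally show ?thesis .
      qed
      have TLb: "norm (TL z u) \<le> (1 + eps L) * norm u" if z: "cmod z \<le> r" for z u
      proof -
        have nb: "norm (smul (z^k) (T k u)) \<le> \<beta> k * r^k * norm u" for k
        proof -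
          have "norm (smul (z^k) (T k u)) = cmod z ^ k * norm (T k u)" by (simp add: smul_norm norm_power)
          also have "\<dots> \<le> r^k * (\<beta> k * norm u)"
            by (intro mult_mono power_mono Tbnd) (use z r0 in auto)
          finally show ?thesis by (simp add: mult_ac)
        qed
        have sb: "summable (\<lambda>k. \<beta> k * r^k * norm u)" by (intro summable_mult2 sumr)
        have sf: "summable (\<lambda>k. smul (z^k) (T k u))"
          by (rule summable_norm_cancel, rule summable_comparison_test[OF _ sb]) (use nb in auto)
        have split: "(\<Sum>k. smul (z^k) (T k u)) = (\<Sum>n. smul (z^(n+L)) (T (n+L) u)) + TL z u"
          unfolding TL_def by (rule suminf_split_initial_segment[OF sf])
        have "norm (\<Sum>n. smul (z^(n+L)) (T (n+L) u)) \<le> (\<Sum>n. \<beta> (n+L) * r^(n+L) * norm u)"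
          by (rule norm_suminf_le) (use nb summable_ignore_initial_segment[OF sb] in auto)
        also have "\<dots> = eps L * norm u" unfolding eps_def
          by (rule suminf_mult2[symmetric], rule summable_ignore_initial_segment[OF sumr])
        finally have tb: "norm (\<Sum>n. smul (z^(n+L)) (T (n+L) u)) \<le> eps L * norm u" .
        have full: "norm (\<Sum>k. smul (z^k) (T k u)) \<le> norm u" using KL z r1 by simp
        have "TL z u = (\<Sum>k. smul (z^k) (T k u)) - (\<Sum>n. smul (z^(n+L)) (T (n+L) u))"
          using split by simp
        then have "norm (TL z u) \<le> norm (\<Sum>k. smul (z^k) (T k u)) + norm (\<Sum>n. smul (z^(n+L)) (T (n+L) u))"
          by (simp add: norm_triangle_ineq4)
        also have "\<dots> \<le> norm u + eps L * norm u" using full tb by simp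
        finally show ?thesis by (simp add: algebra_simps)
      qed
      have "real M * (\<Sum>j<M. (norm (Q j))^2 * r^(2*j))
          = (\<Sum>k<M. (norm (\<Sum>j<M. smul ((of_real r * w^k)^j) (Q j)))^2)"
        unfolding w_def by (rule qpars[OF M, symmetric])
      also have "\<dots> = (\<Sum>k<M. (norm (TL (of_real r * w^k) (Pz (of_real r * w^k))))^2)"
        by (simp add: gen)
      also have "\<dots> \<le> (\<Sum>k<M. ((1 + eps L) * norm (Pz (of_real r * w^k)))^2)"
      proof (rule sum_mono)
        fix k assume "k \<in> {..<M}"
        have "cmod (of_real r * w^k) \<le> r" using r0 by (simp add: w_def norm_mult norm_power)
        then show "(norm (TL (of_real r * w^k) (Pz (of_real r * w^k))))^2 \<le> ((1 + eps L) * norm (Pz (of_real r * w^k)))^2"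
          by (intro power_mono TLb) auto
      qed
      also have "\<dots> = (1 + eps L)^2 * (\<Sum>k<M. (norm (\<Sum>l<M. smul ((of_real r * w^k)^l) (p l)))^2)"
        by (simp add: Pz_def power_mult_distrib sum_distrib_left)
      also have "\<dots> = (1 + eps L)^2 * (real M * (\<Sum>l<M. (norm (p l))^2 * r^(2*l)))"
        unfolding w_def by (simp add: qpars[OF M])
      finally have ineq: "real M * (\<Sum>j<M. (norm (Q j))^2 * r^(2*j)) \<le> (1 + eps L)^2 * (real M * (\<Sum>l<M. (norm (p l))^2 * r^(2*l)))" .
      have pS: "(\<Sum>l<M. (norm (p l))^2 * r^(2*l)) \<le> S"
      proof -
        have "(\<Sum>l<M. (norm (p l))^2 * r^(2*l)) \<le> (\<Sum>l<M. if l < d then (norm (p l))^2 else 0)"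
        proof (rule sum_mono)
          fix l
          have "r^(2*l) \<le> 1" using r0 r1 by (simp add: power_le_one)
          then show "(norm (p l))^2 * r^(2*l) \<le> (if l < d then (norm (p l))^2 else 0)"
            using fin[of l] by (auto intro: mult_left_le)
        qed
        also have "\<dots> = S" unfolding S_def using M_def
          by (subst sum.inter_filter[symmetric]) (auto intro!: sum.cong)
        finally show ?thesis .
      qed
      have XQ: "X r \<le> (\<Sum>j<M. (norm (Q j))^2 * r^(2*j))"
      proof -
        have "X r = (\<Sum>j<N. (norm (Q j))^2 * r^(2*j))"
          unfolding X_def orig_def Q_def using LN by (auto intro!: sum.cong simp: mult.commute)
        also have "\<dots> \<le> (\<Sum>j<M. (norm (Q j))^2 * r^(2*j))"
          using LN M_def by (intro sum_mono2) auto
        finally show ?thesis .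
      qed
      have "real M * X r \<le> real M * ((1 + eps L)^2 * S)"
      proof -
        have "real M * X r \<le> real M * (\<Sum>j<M. (norm (Q j))^2 * r^(2*j))"
          using XQ by (intro mult_left_mono) auto
        also have "\<dots> \<le> (1 + eps L)^2 * (real M * (\<Sum>l<M. (norm (p l))^2 * r^(2*l)))" by (rule ineq)
        also have "\<dots> \<le> (1 + eps L)^2 * (real M * S)" using pS by (intro mult_left_mono) auto
        finally show ?thesis by (simp add: mult_ac)
      qed
      then show ?thesis using M by simp
    qed
    have lim: "(\<lambda>L. (1 + eps L)^2 * S) \<longlonglongrightarrow> (1 + 0)^2 * S"
      by (intro tendsto_intros eps0)
    have ev: "eventually (\<lambda>L. X r \<le> (1 + eps L)^2 * S) sequentially"
      using eventually_ge_at_top[of "max N 1"] by eventually_elim (rule main, auto)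
    show ?thesis using tendsto_lowerbound[OF lim ev] by simp
  qed
  have lim1: "(X \<longlongrightarrow> X 1) (at_left 1)"
    unfolding X_def by (intro tendsto_intros)
  have ev1: "eventually (\<lambda>r. X r \<le> S) (at_left (1::real))"
  proof -
    have "eventually (\<lambda>r. r \<in> {0<..<1}) (at_left (1::real))"
      by (rule eventually_at_left_real) simp
    then show ?thesis by eventually_elim (use A in auto)
  qed
  have "X 1 \<le> S" by (rule tendsto_upperbound[OF lim1 ev1]) simp
  then show ?thesis unfolding X_def orig_def S_def by simp
qed

definition bhyp :: "(nat \<Rightarrow> quat) \<Rightarrow> bool" where
  "bhyp b \<longleftrightarrow> (\<forall>q\<in>qball. summable (\<lambda>n. qmul (qpow q n) (b n)) \<and> norm (ps b q) < 1)"

lemma qball_iff: "q \<in> qball \<longleftrightarrow> norm q < 1"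
  by (simp add: qball_def)

lemma qpow_real: "qpow (complex_of_real t, 0) n = (complex_of_real (t^n), 0)"
  by (induct n) (simp_all add: qone_def qmul_def)

lemma qmul_real: "qmul (complex_of_real t, 0) x = t *\<^sub>R x"
  by (cases x) (simp add: qmul_def scaleR_conv_of_real)

lemma ps_summable_norm:
  assumes "\<forall>q\<in>qball. summable (\<lambda>n. qmul (qpow q n) (b n))" and r: "0 \<le> r" "r < 1"
  shows "summable (\<lambda>n. norm (b n) * r^n)"
proof -
  define t where "t = (1 + r) / 2"
  have t: "0 < t" "t < 1" "r < t" using r by (auto simp: t_def)
  have "(complex_of_real t, 0) \<in> qball" using t by (simp add: qball_iff norm_Pair)
  then have "summable (\<lambda>n. qmul (qpow (complex_of_real t, 0) n) (b n))" using assms by blast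
  then have "summable (\<lambda>n. t^n *\<^sub>R b n)" by (simp only: qpow_real qmul_real)
  then have "Bseq (\<lambda>n. t^n *\<^sub>R b n)" by (intro convergent_imp_Bseq summable_LIMSEQ_zero[THEN convergentI])
  then obtain K where K: "K > 0" "\<And>n. norm (t^n *\<^sub>R b n) \<le> K" unfolding Bseq_def by blast
  have bnd: "norm (b n) * r^n \<le> K * (r/t)^n" for n
  proof -
    have "norm (b n) * r^n = (t^n * norm (b n)) * (r/t)^n" using t by (simp add: power_divide)
    also have "\<dots> \<le> K * (r/t)^n" using K(2)[of n] t r by (intro mult_right_mono) (auto simp: abs_of_pos)
    finally show ?thesis .
  qed
  have sK: "summable (\<lambda>n. K * (r/t)^n)" using t r by (intro summable_mult summable_geometric) auto
  show ?thesis
    by (rule summable_comparison_test'[OF sK]) (use r bnd in auto)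
qed

lemma eig_unit:
  fixes p1 p2 p3 p4 x y sv :: real and q :: quat
  assumes u: "p1^2+p2^2+p3^2+p4^2 = 1"
  and sdef: "sv = p1^2+p2^2-p3^2-p4^2"
  and qdef: "q = (Complex x (y * sv), Complex (-2*y*(p1*p4-p2*p3)) (2*y*(p1*p3+p2*p4)))"
  shows "qmul (Complex p1 p2, Complex p3 p4) q = smul (Complex x y) (Complex p1 p2, Complex p3 p4)"
    and "(norm q)^2 = x^2 + y^2"
proof -
  show "qmul (Complex p1 p2, Complex p3 p4) q = smul (Complex x y) (Complex p1 p2, Complex p3 p4)"
    unfolding qdef sdef qmul_def smul_def
    by (simp add: complex_eq_iff) (use u in algebra)
  show "(norm q)^2 = x^2 + y^2"
    unfolding qdef sdef norm_quat_sq cmod_power2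
    by simp (use u in algebra)
qed

lemma bhyp_norm: "bhyp b \<Longrightarrow> 0 \<le> r \<Longrightarrow> r < 1 \<Longrightarrow> summable (\<lambda>n. norm (b n) * r^n)"
  by (rule ps_summable_norm) (auto simp: bhyp_def)

lemma sumKR:
  assumes hb: "bhyp b" and z: "cmod z < 1"
  shows "summable (\<lambda>k. smul (z^k) (qmul w (b k)))"
proof -
  have "summable (\<lambda>k. norm w * (norm (b k) * cmod z ^ k))"
    by (intro summable_mult bhyp_norm[OF hb]) (use z in auto)
  then show ?thesis
    by (rule summable_norm_cancel[OF summable_comparison_test[rotated]])
       (auto simp: smul_norm qmul_norm norm_power mult_ac)
qed

lemma sumKL:
  assumes hb: "bhyp b" and z: "cmod z < 1"
  shows "summable (\<lambda>k. smul (z^k) (mv (b k) u))"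
proof -
  have "summable (\<lambda>k. norm u * (norm (b k) * cmod z ^ k))"
    by (intro summable_mult bhyp_norm[OF hb]) (use z in auto)
  then show ?thesis
    by (rule summable_norm_cancel[OF summable_comparison_test[rotated]])
       (auto simp: smul_norm mv_norm norm_power mult_ac)
qed

lemma KLR_unit:
  assumes hb: "bhyp b" and z: "cmod z < 1" and w1: "norm w = 1"
  shows "norm (\<Sum>k. smul (z^k) (qmul w (b k))) \<le> 1"
proof -
  define p1 p2 p3 p4 where "p1 = Re (fst w)" and "p2 = Im (fst w)" and "p3 = Re (snd w)" and "p4 = Im (snd w)"
  have wp: "w = (Complex p1 p2, Complex p3 p4)" unfolding p1_def p2_def p3_def p4_def by simp
  have u: "p1^2+p2^2+p3^2+p4^2 = 1" using w1 unfolding wp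
    by (simp add: norm_Pair cmod_power2 add.assoc)
  define sv where "sv = p1^2+p2^2-p3^2-p4^2"
  define q where "q = (Complex (Re z) (Im z * sv), Complex (-2*Im z*(p1*p4-p2*p3)) (2*Im z*(p1*p3+p2*p4)))"
  have eig: "qmul w q = smul z w" using eig_unit(1)[OF u sv_def q_def] wp by simp
  have "(norm q)^2 = (cmod z)^2" using eig_unit(2)[OF u sv_def q_def] by (simp add: cmod_power2)
  then have nq: "norm q = cmod z" by (simp add: power2_eq_iff_nonneg)
  have pw: "qmul w (qpow q n) = smul (z^n) w" for n
    by (induct n) (simp_all add: qmul_assoc[symmetric] eig qmul_smul_left smul_smul mult.commute)
  have qB: "q \<in> qball" using nq z by (simp add: qball_iff)
  then have sq: "summable (\<lambda>n. qmul (qpow q n) (b n))" and nps: "norm (ps b q) < 1"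
    using hb by (auto simp: bhyp_def)
  have "qmul w (ps b q) = (\<Sum>n. qmul w (qmul (qpow q n) (b n)))"
    unfolding ps_def by (rule bounded_linear.suminf[OF bl_qmul_right sq])
  also have "\<dots> = (\<Sum>k. smul (z^k) (qmul w (b k)))"
    by (simp add: qmul_assoc[symmetric] pw qmul_smul_left)
  finally have eqn: "qmul w (ps b q) = (\<Sum>k. smul (z^k) (qmul w (b k)))" .
  have "norm (\<Sum>k. smul (z^k) (qmul w (b k))) = norm (ps b q)"
    using qmul_norm[of w "ps b q"] w1 eqn by simp
  then show ?thesis using nps by simp
qed

lemma smul_scaleR: "smul c (t *\<^sub>R x) = t *\<^sub>R smul c x"
  unfolding smul_def by (simp add: scaleR_conv_of_real algebra_simps)

lemma KLR:
  assumes hb: "bhyp b" and z: "cmod z < 1"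
  shows "norm (\<Sum>k. smul (z^k) (qmul w (b k))) \<le> norm w"
proof (cases "w = 0")
  case True then show ?thesis by simp
next
  case False
  define w' where "w' = (1 / norm w) *\<^sub>R w"
  have w': "norm w' = 1" using False by (simp add: w'_def)
  have ww: "w = norm w *\<^sub>R w'" using False by (simp add: w'_def)
  have "(\<Sum>k. smul (z^k) (qmul w (b k))) = norm w *\<^sub>R (\<Sum>k. smul (z^k) (qmul w' (b k)))"
    apply (subst ww)
    apply (simp only: qmul_scaleR_left smul_scaleR)
    apply (rule suminf_scaleR_right[symmetric, OF sumKR[OF hb z]])
    done
  then have "norm (\<Sum>k. smul (z^k) (qmul w (b k))) = norm w * norm (\<Sum>k. smul (z^k) (qmul w' (b k)))"
    by simp
  also have "\<dots> \<le> norm w * 1" using KLR_unit[OF hb z w'] by (intro mult_left_mono) auto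
  finally show ?thesis by simp
qed

lemma KLL:
  assumes hb: "bhyp b" and z: "cmod z < 1"
  shows "norm (\<Sum>k. smul (z^k) (mv (b k) u)) \<le> norm u"
proof -
  define V where "V = (\<Sum>k. smul (z^k) (mv (b k) u))"
  define W where "W = (\<Sum>k. smul (z^k) (qmul (qc V) (b k)))"
  have "of_real ((norm V)^2) = dot (qc V) V" by (simp add: dot_qc)
  also have "\<dots> = (\<Sum>k. dot (qc V) (smul (z^k) (mv (b k) u)))"
    unfolding V_def[symmetric, THEN arg_cong[where f="\<lambda>x. dot (qc V) x"]]
    unfolding V_def by (rule bounded_linear.suminf[OF bl_dot_right sumKL[OF hb z]])
  also have "\<dots> = (\<Sum>k. dot (smul (z^k) (qmul (qc V) (b k))) u)"
    by (simp add: dot_smul_left dot_smul_right dot_qmul_mv)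
  also have "\<dots> = dot W u"
    unfolding W_def by (rule bounded_linear.suminf[OF bl_dot_left sumKR[OF hb z], symmetric])
  finally have eq: "of_real ((norm V)^2) = dot W u" .
  have "(norm V)^2 = cmod (dot W u)" unfolding eq[symmetric] norm_of_real by simp
  also have "\<dots> \<le> norm W * norm u" by (rule dot_norm)
  also have "\<dots> \<le> norm V * norm u"
    using KLR[OF hb z, of "qc V"] unfolding W_def by (intro mult_right_mono) auto
  finally have "(norm V)^2 \<le> norm V * norm u" .
  then have "norm V \<le> norm u"
    by (cases "norm V = 0") (auto simp: power2_eq_square)
  then show ?thesis unfolding V_def .
qed

lemma sum_rev_atMost: "(\<Sum>i\<le>j. g (j - i)) = (\<Sum>i\<le>(j::nat). g i)"
  using sum.nat_diff_reindex[of g "Suc j"] by (simp add: lessThan_Suc_atMost)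

lemma CR:
  assumes hb: "bhyp b" and hS: "\<And>N. (\<Sum>j<N. (norm (h j))^2) \<le> S"
  shows "(\<Sum>j<N. (norm (sprod h b j))^2) \<le> S"
proof -
  define p where "p l = (if l < N then h l else 0)" for l
  have tb: "norm (qmul u (b k)) \<le> norm (b k) * norm u" for k u by (simp add: qmul_norm mult.commute)
  have "(\<Sum>j<N. (norm (\<Sum>k\<le>j. qmul (p (j-k)) (b k)))^2) \<le> (\<Sum>l<N. (norm (p l))^2)"
    by (rule G_main[where T="\<lambda>k u. qmul u (b k)" and \<beta>="\<lambda>k. norm (b k)"])
       (auto simp: qmul_add_left qmul_smul_left p_def tb
             intro: bhyp_norm[OF hb] KLR[OF hb])
  also have "\<dots> = (\<Sum>l<N. (norm (h l))^2)" by (simp add: p_def)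
  also have "\<dots> \<le> S" by (rule hS)
  finally have *: "(\<Sum>j<N. (norm (\<Sum>k\<le>j. qmul (p (j-k)) (b k)))^2) \<le> S" .
  have "(\<Sum>k\<le>j. qmul (p (j-k)) (b k)) = sprod h b j" if "j < N" for j
  proof -
    have "(\<Sum>k\<le>j. qmul (p (j-k)) (b k)) = (\<Sum>k\<le>j. qmul (h (j-k)) (b (j - (j - k))))"
      using that by (intro sum.cong) (auto simp: p_def)
    also have "\<dots> = (\<Sum>k\<le>j. qmul (h k) (b (j - k)))"
      by (rule sum_rev_atMost[where g="\<lambda>k. qmul (h k) (b (j - k))"])
    finally show ?thesis by (simp add: sprod_def)
  qed
  then show ?thesis using * by simp
qed

lemma CL:
  assumes hb: "bhyp b" and hS: "\<And>N. (\<Sum>j<N. (norm (h j))^2) \<le> S"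
  shows "(\<Sum>j<N. (norm (sprod b h j))^2) \<le> S"
proof -
  define p where "p l = (if l < N then qcol (h l) else 0)" for l
  have "(\<Sum>j<N. (norm (\<Sum>k\<le>j. mv (b k) (p (j-k))))^2) \<le> (\<Sum>l<N. (norm (p l))^2)"
    by (rule G_main[where T="\<lambda>k u. mv (b k) u" and \<beta>="\<lambda>k. norm (b k)"])
       (auto simp: mv_add mv_smul mv_norm p_def
             intro: bhyp_norm[OF hb] KLL[OF hb])
  also have "\<dots> = (\<Sum>l<N. (norm (h l))^2)" by (simp add: p_def)
  also have "\<dots> \<le> S" by (rule hS)
  finally have *: "(\<Sum>j<N. (norm (\<Sum>k\<le>j. mv (b k) (p (j-k))))^2) \<le> S" .
  have "norm (\<Sum>k\<le>j. mv (b k) (p (j-k))) = norm (sprod b h j)" if "j < N" for j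
  proof -
    have "(\<Sum>k\<le>j. mv (b k) (p (j-k))) = (\<Sum>k\<le>j. qcol (qmul (b k) (h (j-k))))"
      using that by (intro sum.cong) (auto simp: p_def qcol_qmul)
    also have "\<dots> = qcol (sprod b h j)" by (simp add: sprod_def qcol_sum)
    finally show ?thesis by simp
  qed
  then show ?thesis using * by simp
qed

lemma spow_low: "b 0 = 0 \<Longrightarrow> m < n \<Longrightarrow> spow b n m = 0"
proof (induct n arbitrary: m)
  case 0 then show ?case by simp
next
  case (Suc n)
  have "qmul (b k) (spow b n (m - k)) = 0" if "k \<le> m" for k
  proof (cases "k = 0")
    case True then show ?thesis using Suc.prems by simp
  next
    case False then show ?thesis using Suc that by simp
  qed
  then show ?case by (simp add: sprod_def)
qed

lemma spow0: "spow b 0 m = (if m = 0 then qone else 0)" by simp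

lemma spow_l2: "bhyp b \<Longrightarrow> (\<Sum>m<N. (norm (spow b n m))^2) \<le> 1"
proof (induct n arbitrary: N)
  case 0
  have "(\<Sum>m<N. (norm (spow b 0 m))^2) = (\<Sum>m<N. if m = 0 then 1 else 0)"
    by (intro sum.cong) auto
  also have "\<dots> \<le> 1" by (simp add: sum.delta)
  finally show ?case .
next
  case (Suc n)
  have "(\<Sum>m<N. (norm (sprod b (spow b n) m))^2) \<le> 1"
    by (rule CL[OF Suc.prems], rule Suc.hyps[OF Suc.prems])
  then show ?case by simp
qed

lemma spow_bound: assumes "bhyp b" shows "norm (spow b n m) \<le> 1"
proof -
  have "(norm (spow b n m))^2 \<le> (\<Sum>j<Suc m. (norm (spow b n j))^2)"
    by (rule member_le_sum) auto
  also have "\<dots> \<le> 1" by (rule spow_l2[OF assms])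
  finally show ?thesis by (simp add: power_le_one_iff abs_le_iff)
qed

lemma sprod_assoc: "sprod (sprod a b) c = sprod a (sprod b c)"
proof
  fix n
  define f where "f k l = qmul (a k) (qmul (b l) (c (n - k - l)))" for k l
  have "sprod (sprod a b) c n = (\<Sum>j\<le>n. \<Sum>k\<le>j. f k (j - k))"
    unfolding sprod_def f_def
    by (auto simp: qmul_sum_left qmul_assoc intro!: sum.cong arg_cong[where f="\<lambda>x. qmul _ (qmul _ (c x))"])
  also have "\<dots> = (\<Sum>(k,l)\<in>{(k,l). k + l \<le> n}. f k l)"
    by (rule sum.triangle_reindex_eq[symmetric])
  also have "{(k,l). k + l \<le> n} = Sigma {..n} (\<lambda>k. {..n-k})" by auto
  also have "(\<Sum>(k,l)\<in>Sigma {..n} (\<lambda>k. {..n-k}). f k l) = (\<Sum>k\<le>n. \<Sum>l\<le>n-k. f k l)"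
    by (rule sum.Sigma[symmetric]) auto
  also have "\<dots> = sprod a (sprod b c) n"
    unfolding sprod_def f_def by (simp add: qmul_sum_right diff_diff_add)
  finally show "sprod (sprod a b) c n = sprod a (sprod b c) n" .
qed

lemma sprod_one_left: "sprod (spow b 0) x = x"
proof
  fix n
  have "sprod (spow b 0) x n = (\<Sum>k\<le>n. if k = 0 then x n else 0)"
    unfolding sprod_def by (intro sum.cong) auto
  then show "sprod (spow b 0) x n = x n" by (simp add: sum.delta)
qed

lemma sprod_one_right: "sprod x (spow b 0) = x"
proof
  fix n
  have "sprod x (spow b 0) n = (\<Sum>k\<le>n. if k = n then x n else 0)"
    unfolding sprod_def by (intro sum.cong) auto
  then show "sprod x (spow b 0) n = x n" by (simp add: sum.delta)
qed

lemma spow_comm: "spow b (Suc n) = sprod (spow b n) b"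
proof (induct n)
  case 0 then show ?case by (simp add: sprod_one_right[of b b, simplified] sprod_one_left[of b b, simplified])
next
  case (Suc n)
  have "spow b (Suc (Suc n)) = sprod b (sprod (spow b n) b)" using Suc by simp
  also have "\<dots> = sprod (spow b (Suc n)) b" by (simp add: sprod_assoc)
  finally show ?case .
qed

definition Cc :: "(nat \<Rightarrow> quat) \<Rightarrow> (nat \<Rightarrow> quat) \<Rightarrow> nat \<Rightarrow> quat" where
  "Cc b a m = (\<Sum>n\<le>m. qmul (spow b n m) (a n))"
definition Dc :: "(nat \<Rightarrow> quat) \<Rightarrow> (nat \<Rightarrow> quat) \<Rightarrow> nat \<Rightarrow> quat" where
  "Dc b a m = (\<Sum>n\<le>m. qmul (a n) (spow b n m))"

lemma sum_ext_atMost: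
  fixes m K :: nat
  assumes "m \<le> K" "\<And>n. m < n \<Longrightarrow> f n = 0"
  shows "(\<Sum>n\<le>K. f n) = (\<Sum>n\<le>m. f n)"
proof (rule sum.mono_neutral_right)
  show "{..m} \<subseteq> {..K}" using assms(1) by (auto intro: le_trans)
  show "\<forall>i\<in>{..K} - {..m}. f i = 0" using assms(2) by auto
qed simp

lemma Cc_rec:
  assumes b0: "b 0 = 0"
  shows "Cc b a m = (if m = 0 then a 0 else 0) + sprod b (Cc b (\<lambda>n. a (Suc n))) m"
proof -
  have "sprod b (Cc b (\<lambda>n. a (Suc n))) m
      = (\<Sum>k\<le>m. qmul (b k) (\<Sum>n\<le>m. qmul (spow b n (m-k)) (a (Suc n))))"
    unfolding sprod_def Cc_def
    by (intro sum.cong refl arg_cong[where f="qmul _"] sum_ext_atMost[symmetric])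
       (auto simp: spow_low[of b, OF b0])
  also have "\<dots> = (\<Sum>n\<le>m. \<Sum>k\<le>m. qmul (qmul (b k) (spow b n (m-k))) (a (Suc n)))"
    by (simp add: qmul_sum_right qmul_assoc) (rule sum.swap)
  also have "\<dots> = (\<Sum>n\<le>m. qmul (spow b (Suc n) m) (a (Suc n)))"
    by (simp add: qmul_sum_left[symmetric] sprod_def)
  finally have *: "sprod b (Cc b (\<lambda>n. a (Suc n))) m = (\<Sum>n\<le>m. qmul (spow b (Suc n) m) (a (Suc n)))" .
  have "Cc b a m = (\<Sum>n\<le>Suc m. qmul (spow b n m) (a n))"
    unfolding Cc_def by (rule sum_ext_atMost[symmetric]) (auto simp: spow_low[of b, OF b0])
  also have "\<dots> = qmul (spow b 0 m) (a 0) + (\<Sum>n\<le>m. qmul (spow b (Suc n) m) (a (Suc n)))"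
    by (rule sum.atMost_Suc_shift)
  finally show ?thesis using * by simp
qed

lemma Dc_rec:
  assumes b0: "b 0 = 0"
  shows "Dc b a m = (if m = 0 then a 0 else 0) + sprod (Dc b (\<lambda>n. a (Suc n))) b m"
proof -
  have "sprod (Dc b (\<lambda>n. a (Suc n))) b m
      = (\<Sum>k\<le>m. qmul (\<Sum>n\<le>m. qmul (a (Suc n)) (spow b n k)) (b (m - k)))"
    unfolding sprod_def Dc_def
    by (intro sum.cong refl arg_cong[where f="\<lambda>x. qmul x _"] sum_ext_atMost[symmetric])
       (auto simp: spow_low[of b, OF b0])
  also have "\<dots> = (\<Sum>n\<le>m. \<Sum>k\<le>m. qmul (a (Suc n)) (qmul (spow b n k) (b (m - k))))"
    by (simp add: qmul_sum_left qmul_assoc) (rule sum.swap)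
  also have "\<dots> = (\<Sum>n\<le>m. qmul (a (Suc n)) (spow b (Suc n) m))"
    by (simp add: qmul_sum_right[symmetric] spow_comm sprod_def del: spow.simps)
  finally have *: "sprod (Dc b (\<lambda>n. a (Suc n))) b m = (\<Sum>n\<le>m. qmul (a (Suc n)) (spow b (Suc n) m))" .
  have "Dc b a m = (\<Sum>n\<le>Suc m. qmul (a n) (spow b n m))"
    unfolding Dc_def by (rule sum_ext_atMost[symmetric]) (auto simp: spow_low[of b, OF b0])
  also have "\<dots> = qmul (a 0) (spow b 0 m) + (\<Sum>n\<le>m. qmul (a (Suc n)) (spow b (Suc n) m))"
    by (rule sum.atMost_Suc_shift)
  finally show ?thesis using * by simp
qed

lemma split_first_sq:
  assumes e0: "X 0 = a0 + Y 0" and eS: "\<And>m. X (Suc m) = Y (Suc m)" and Y0: "Y 0 = 0"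
    and YB: "(\<Sum>m<N. (norm (Y m))^2) \<le> S"
  shows "(\<Sum>m<N. (norm (X m))^2) \<le> (norm a0)^2 + S"
proof (cases N)
  case 0 then show ?thesis using YB by simp
next
  case (Suc N')
  have "(\<Sum>m<N. (norm (X m))^2) = (norm a0)^2 + (\<Sum>m<N'. (norm (Y (Suc m)))^2)"
    unfolding Suc sum.lessThan_Suc_shift using e0 Y0 eS by simp
  also have "(\<Sum>m<N'. (norm (Y (Suc m)))^2) = (\<Sum>m<N. (norm (Y m))^2)"
    unfolding Suc sum.lessThan_Suc_shift using Y0 by simp
  finally show ?thesis using YB by simp
qed

lemma Cc_poly:
  assumes hb: "bhyp b" and b0: "b 0 = 0"
  shows "(\<forall>n\<ge>d. a n = 0) \<Longrightarrow> (\<Sum>m<N. (norm (Cc b a m))^2) \<le> (\<Sum>n<d. (norm (a n))^2)"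
proof (induct d arbitrary: a N)
  case 0
  then have "Cc b a m = 0" for m by (simp add: Cc_def)
  then show ?case by simp
next
  case (Suc d)
  define a' where "a' = (\<lambda>n. a (Suc n))"
  have IH: "\<And>N. (\<Sum>m<N. (norm (Cc b a' m))^2) \<le> (\<Sum>n<d. (norm (a' n))^2)"
    by (rule Suc.hyps) (use Suc.prems in \<open>simp add: a'_def\<close>)
  have "(\<Sum>m<N. (norm (Cc b a m))^2) \<le> (norm (a 0))^2 + (\<Sum>n<d. (norm (a' n))^2)"
  proof (rule split_first_sq[where Y="sprod b (Cc b a')"])
    show "Cc b a 0 = a 0 + sprod b (Cc b a') 0" using Cc_rec[of b, OF b0, of a 0] by (simp add: a'_def)
    show "Cc b a (Suc m) = sprod b (Cc b a') (Suc m)" for m using Cc_rec[of b, OF b0, of a "Suc m"] by (simp add: a'_def)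
    show "sprod b (Cc b a') 0 = 0" by (simp add: sprod_def b0)
    show "(\<Sum>m<N. (norm (sprod b (Cc b a') m))^2) \<le> (\<Sum>n<d. (norm (a' n))^2)"
      by (rule CL[OF hb IH])
  qed
  also have "\<dots> = (\<Sum>n<Suc d. (norm (a n))^2)"
    unfolding sum.lessThan_Suc_shift a'_def by simp
  finally show ?case .
qed

lemma Dc_poly:
  assumes hb: "bhyp b" and b0: "b 0 = 0"
  shows "(\<forall>n\<ge>d. a n = 0) \<Longrightarrow> (\<Sum>m<N. (norm (Dc b a m))^2) \<le> (\<Sum>n<d. (norm (a n))^2)"
proof (induct d arbitrary: a N)
  case 0
  then have "Dc b a m = 0" for m by (simp add: Dc_def)
  then show ?case by simp
next
  case (Suc d)
  define a' where "a' = (\<lambda>n. a (Suc n))"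
  have IH: "\<And>N. (\<Sum>m<N. (norm (Dc b a' m))^2) \<le> (\<Sum>n<d. (norm (a' n))^2)"
    by (rule Suc.hyps) (use Suc.prems in \<open>simp add: a'_def\<close>)
  have "(\<Sum>m<N. (norm (Dc b a m))^2) \<le> (norm (a 0))^2 + (\<Sum>n<d. (norm (a' n))^2)"
  proof (rule split_first_sq[where Y="sprod (Dc b a') b"])
    show "Dc b a 0 = a 0 + sprod (Dc b a') b 0" using Dc_rec[of b, OF b0, of a 0] by (simp add: a'_def)
    show "Dc b a (Suc m) = sprod (Dc b a') b (Suc m)" for m using Dc_rec[of b, OF b0, of a "Suc m"] by (simp add: a'_def)
    show "sprod (Dc b a') b 0 = 0" by (simp add: sprod_def b0)
    show "(\<Sum>m<N. (norm (sprod (Dc b a') b m))^2) \<le> (\<Sum>n<d. (norm (a' n))^2)"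
      by (rule CR[OF hb IH])
  qed
  also have "\<dots> = (\<Sum>n<Suc d. (norm (a n))^2)"
    unfolding sum.lessThan_Suc_shift a'_def by simp
  finally show ?case .
qed

lemma Cc_l2:
  assumes hb: "bhyp b" and b0: "b 0 = 0"
  shows "(\<Sum>m<N. (norm (Cc b a m))^2) \<le> (\<Sum>n<N. (norm (a n))^2)"
proof -
  define atr where "atr n = (if n < N then a n else 0)" for n
  have "(\<Sum>m<N. (norm (Cc b a m))^2) = (\<Sum>m<N. (norm (Cc b atr m))^2)"
    unfolding Cc_def atr_def by (intro sum.cong refl) (auto intro!: sum.cong arg_cong[where f="\<lambda>x. (norm x)^2"])
  also have "\<dots> \<le> (\<Sum>n<N. (norm (atr n))^2)" by (rule Cc_poly[OF hb b0]) (simp add: atr_def)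
  also have "\<dots> = (\<Sum>n<N. (norm (a n))^2)" by (simp add: atr_def)
  finally show ?thesis .
qed

lemma Dc_l2:
  assumes hb: "bhyp b" and b0: "b 0 = 0"
  shows "(\<Sum>m<N. (norm (Dc b a m))^2) \<le> (\<Sum>n<N. (norm (a n))^2)"
proof -
  define atr where "atr n = (if n < N then a n else 0)" for n
  have "(\<Sum>m<N. (norm (Dc b a m))^2) = (\<Sum>m<N. (norm (Dc b atr m))^2)"
    unfolding Dc_def atr_def by (intro sum.cong refl) (auto intro!: sum.cong arg_cong[where f="\<lambda>x. (norm x)^2"])
  also have "\<dots> \<le> (\<Sum>n<N. (norm (atr n))^2)" by (rule Dc_poly[OF hb b0]) (simp add: atr_def)
  also have "\<dots> = (\<Sum>n<N. (norm (a n))^2)" by (simp add: atr_def)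
  finally show ?thesis .
qed

lemma real_ps_zero:
  fixes u :: "nat \<Rightarrow> real"
  assumes h: "\<And>t. \<bar>t\<bar> < 1 \<Longrightarrow> (\<lambda>n. u n * t^n) sums 0"
  shows "u k = 0"
proof (induct k rule: less_induct)
  case (less k)
  have "(\<lambda>n. u (n + k) * t^n) sums 0" if t0: "t \<noteq> 0" and t1: "norm t < 1" for t :: real
  proof -
    have "(\<lambda>n. u n * t^n) sums (0 + (\<Sum>i<k. u i * t^i))"
      using h[of t] t1 less by simp
    then have "(\<lambda>i. u (i + k) * t^(i + k)) sums 0" by (subst sums_iff_shift)
    then have "(\<lambda>i. u (i + k) * t^(i + k) * (1 / t^k)) sums (0 * (1 / t^k))" by (rule sums_mult2)
    then show ?thesis using t0 by (simp add: power_add)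
  qed
  then have "((\<lambda>_::real. 0::real) \<longlongrightarrow> (\<lambda>n. u (n+k)) 0) (at (0::real))"
    using powser_limit_0_strong[where s=1 and a="\<lambda>n. u (n+k)" and f="\<lambda>_. 0"] by auto
  then show ?case using LIM_const_eq by fastforce
qed

lemma ps_unique:
  assumes "ps_rep g a" "ps_rep g a'"
  shows "a = a'"
proof
  fix n
  define e where "e n = a n - a' n" for n
  have es: "(\<lambda>n. t^n *\<^sub>R e n) sums 0" if t: "\<bar>t\<bar> < 1" for t
  proof -
    define q where "q = (complex_of_real t, 0::complex)"
    have qB: "q \<in> qball" using t by (simp add: q_def qball_iff norm_Pair)
    have "summable (\<lambda>n. qmul (qpow q n) (a n)) \<and> g q = ps a q" using assms(1) qB unfolding ps_rep_def by blast
    then have s1: "(\<lambda>n. qmul (qpow q n) (a n)) sums g q" unfolding ps_def by (simp add: summable_sums)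
    have "summable (\<lambda>n. qmul (qpow q n) (a' n)) \<and> g q = ps a' q" using assms(2) qB unfolding ps_rep_def by blast
    then have s2: "(\<lambda>n. qmul (qpow q n) (a' n)) sums g q" unfolding ps_def by (simp add: summable_sums)
    have "(\<lambda>n. qmul (qpow q n) (a n) - qmul (qpow q n) (a' n)) sums (g q - g q)"
      by (rule sums_diff[OF s1 s2])
    then show ?thesis by (simp only: q_def qpow_real qmul_real e_def scaleR_diff_right) simp
  qed
  have comp: "(c (e n)) = 0" if bl: "bounded_linear c" for c :: "quat \<Rightarrow> real"
  proof (rule real_ps_zero)
    fix t :: real assume "\<bar>t\<bar> < 1"
    from bounded_linear.sums[OF bl es[OF this]]
    show "(\<lambda>n. c (e n) * t^n) sums 0"
      using bl by (simp add: linear_simps bounded_linear.linear mult.commute)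
  qed
  have "Re (fst (e n)) = 0" by (rule comp) (intro bounded_linear_compose[OF bounded_linear_Re] bounded_linear_fst)
  moreover have "Im (fst (e n)) = 0" by (rule comp) (intro bounded_linear_compose[OF bounded_linear_Im] bounded_linear_fst)
  moreover have "Re (snd (e n)) = 0" by (rule comp) (intro bounded_linear_compose[OF bounded_linear_Re] bounded_linear_snd)
  moreover have "Im (snd (e n)) = 0" by (rule comp) (intro bounded_linear_compose[OF bounded_linear_Im] bounded_linear_snd)
  ultimately have "e n = 0" by (simp add: prod_eq_iff complex_eq_iff)
  then show "a n = a' n" by (simp add: e_def)
qed

lemma coeffs_eq: "ps_rep g a \<Longrightarrow> coeffs g = a"
  unfolding coeffs_def by (rule some_equality) (auto intro: ps_unique)

lemma infsum_suminf_norm: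
  fixes f :: "nat \<Rightarrow> 'a::banach"
  assumes "summable (\<lambda>n. norm (f n))"
  shows "infsum f UNIV = suminf f"
  using norm_summable_imp_has_sum[OF assms summable_sums[OF summable_norm_cancel[OF assms]]]
  by (rule infsumI)

lemma fubini_geo:
  fixes F :: "nat \<Rightarrow> nat \<Rightarrow> quat"
  assumes bnd: "\<And>n m. norm (F n m) \<le> A * \<sigma>^n * \<sigma>^m" and s0: "0 \<le> \<sigma>" and s1: "\<sigma> < 1"
  shows "\<And>n. summable (\<lambda>m. norm (F n m))" "\<And>m. summable (\<lambda>n. norm (F n m))"
    "summable (\<lambda>n. norm (\<Sum>m. F n m))" "summable (\<lambda>m. norm (\<Sum>n. F n m))"
    "(\<Sum>n. \<Sum>m. F n m) = (\<Sum>m. \<Sum>n. F n m)"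
proof -
  have A: "0 \<le> A" using order_trans[OF norm_ge_zero bnd[of 0 0]] by simp
  have geo: "summable (\<lambda>k. \<sigma>^k)" using s0 s1 by (intro summable_geometric) auto
  have gsum: "(\<lambda>k. \<sigma>^k) sums (1/(1-\<sigma>))" using s0 s1 by (intro geometric_sums) auto
  show i1: "summable (\<lambda>m. norm (F n m))" for n
    by (rule summable_comparison_test'[where g="\<lambda>m. A * \<sigma>^n * \<sigma>^m"])
       (use geo bnd in \<open>auto intro: summable_mult\<close>)
  show i2: "summable (\<lambda>n. norm (F n m))" for m
  proof -
    have "summable (\<lambda>n. (A * \<sigma>^m) * \<sigma>^n)" by (rule summable_mult[OF geo])
    then show ?thesis
      by (rule summable_comparison_test') (use bnd in \<open>simp add: mult_ac\<close>)
  qed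
  have o1: "norm (\<Sum>m. F n m) \<le> A * \<sigma>^n * (1/(1-\<sigma>))" for n
  proof -
    have "norm (\<Sum>m. F n m) \<le> (\<Sum>m. A * \<sigma>^n * \<sigma>^m)"
      by (rule norm_suminf_le) (use bnd geo in \<open>auto intro: summable_mult\<close>)
    also have "\<dots> = A * \<sigma>^n * (1/(1-\<sigma>))" using sums_mult[OF gsum, of "A * \<sigma>^n"] by (simp add: sums_iff)
    finally show ?thesis .
  qed
  have o2: "norm (\<Sum>n. F n m) \<le> A * \<sigma>^m * (1/(1-\<sigma>))" for m
  proof -
    have "norm (\<Sum>n. F n m) \<le> (\<Sum>n. A * \<sigma>^m * \<sigma>^n)"
      by (rule norm_suminf_le[OF _ summable_mult[OF geo]]) (use bnd in \<open>simp add: mult_ac\<close>)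
    also have "\<dots> = A * \<sigma>^m * (1/(1-\<sigma>))" using sums_mult[OF gsum, of "A * \<sigma>^m"] by (simp add: sums_iff)
    finally show ?thesis .
  qed
  have gg: "summable (\<lambda>n. A * \<sigma>^n * (1/(1-\<sigma>)))" by (intro summable_mult2 summable_mult geo)
  show o1s: "summable (\<lambda>n. norm (\<Sum>m. F n m))"
    by (rule summable_comparison_test'[OF gg]) (use o1 in auto)
  show o2s: "summable (\<lambda>m. norm (\<Sum>n. F n m))"
    by (rule summable_comparison_test'[OF gg]) (use o2 in auto)
  have hs: "((\<lambda>m. A * \<sigma>^n * \<sigma>^m) has_sum (A * \<sigma>^n * (1/(1-\<sigma>)))) UNIV" for n
    by (rule sums_nonneg_imp_has_sum) (use sums_mult[OF gsum, of "A * \<sigma>^n"] A s0 in auto)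
  have Gs: "(\<lambda>(n,m). A * \<sigma>^n * \<sigma>^m) summable_on (UNIV \<times> UNIV)"
  proof -
    have "(\<lambda>p. A * \<sigma>^fst p * \<sigma>^snd p) summable_on Sigma UNIV (\<lambda>_. UNIV)"
      by (rule summable_on_SigmaI[where g="\<lambda>n. A * \<sigma>^n * (1/(1-\<sigma>))"])
         (use hs gg A s0 s1 in \<open>auto simp: summable_on_UNIV_nonneg_real_iff\<close>)
    then show ?thesis by (simp add: case_prod_beta')
  qed
  have Fabs: "(\<lambda>x. norm ((\<lambda>(n,m). F n m) x)) summable_on (UNIV \<times> UNIV)"
  proof (rule Infinite_Sum.abs_summable_on_comparison_test[where g="\<lambda>(n,m). A * \<sigma>^n * \<sigma>^m"])
    show "(\<lambda>x. norm ((\<lambda>(n,m). A * \<sigma>^n * \<sigma>^m) x)) summable_on UNIV \<times> UNIV"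
      using Gs A s0 by (simp add: case_prod_beta' abs_mult)
    show "norm (case x of (n, m) \<Rightarrow> F n m) \<le> norm (case x of (n, m) \<Rightarrow> A * \<sigma> ^ n * \<sigma> ^ m)" for x
      using bnd A s0 by (cases x) (auto simp: abs_mult)
  qed
  have "infsum (\<lambda>n. infsum (\<lambda>m. F n m) UNIV) UNIV = infsum (\<lambda>m. infsum (\<lambda>n. F n m) UNIV) UNIV"
    by (rule infsum_swap_banach) (rule abs_summable_summable[OF Fabs])
  then show "(\<Sum>n. \<Sum>m. F n m) = (\<Sum>m. \<Sum>n. F n m)"
    by (simp add: infsum_suminf_norm i1 i2 o1s o2s)
qed

lemma qpow_norm: "norm (qpow q m) = norm q ^ m"
  by (induct m) (simp_all add: qmul_norm)

lemma l2_bound: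
  assumes "summable (\<lambda>n. (norm (a n))^2)"
  shows "norm (a n) \<le> sqrt (\<Sum>n. (norm (a n))^2)"
proof -
  have "(\<Sum>i\<in>{n}. (norm (a i))^2) \<le> (\<Sum>n. (norm (a n))^2)"
    by (rule sum_le_suminf[OF assms]) auto
  then have "(norm (a n))^2 \<le> (\<Sum>n. (norm (a n))^2)" by simp
  then show ?thesis by (simp add: real_le_rsqrt)
qed

lemma tri_bound:
  assumes q: "norm q < 1" and hb: "bhyp b" and b0: "b 0 = 0" and K: "\<And>n. norm (a n) \<le> K"
  shows "norm (qmul (qpow q m) (qmul (spow b n m) (a n))) \<le> K * sqrt (norm q) ^ n * sqrt (norm q) ^ m"
    and "norm (qmul (qpow q m) (qmul (a n) (spow b n m))) \<le> K * sqrt (norm q) ^ n * sqrt (norm q) ^ m"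
proof -
  define \<sigma> where "\<sigma> = sqrt (norm q)"
  have s0: "0 \<le> \<sigma>" and s1: "\<sigma> \<le> 1" using q by (auto simp: \<sigma>_def)
  have K0: "0 \<le> K" using order_trans[OF norm_ge_zero K[of 0]] .
  have "norm (spow b n m) * norm (a n) * norm q ^ m \<le> K * \<sigma>^n * \<sigma>^m"
  proof (cases "m < n")
    case True then show ?thesis using spow_low[of b, OF b0 True] K0 s0 by simp
  next
    case False
    have qm: "norm q ^ m = \<sigma>^m * \<sigma>^m" by (simp add: \<sigma>_def power_mult_distrib[symmetric])
    have "\<sigma>^m \<le> \<sigma>^n" using False s0 s1 by (intro power_decreasing) auto
    then have le: "norm q ^ m \<le> \<sigma>^n * \<sigma>^m" unfolding qm by (intro mult_right_mono) (use s0 in auto)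
    have "norm (spow b n m) * norm (a n) \<le> 1 * K"
      using spow_bound[OF hb, of n m] K[of n] by (intro mult_mono) auto
    then have ab: "norm (spow b n m) * norm (a n) \<le> K" by simp
    have "(norm (spow b n m) * norm (a n)) * norm q ^ m \<le> K * (\<sigma>^n * \<sigma>^m)"
      by (rule mult_mono[OF ab le K0]) simp
    then show ?thesis by (simp add: mult_ac)
  qed
  then show "norm (qmul (qpow q m) (qmul (spow b n m) (a n))) \<le> K * sqrt (norm q) ^ n * sqrt (norm q) ^ m"
    and "norm (qmul (qpow q m) (qmul (a n) (spow b n m))) \<le> K * sqrt (norm q) ^ n * sqrt (norm q) ^ m"
    by (simp_all add: qmul_norm qpow_norm \<sigma>_def mult_ac)
qed

lemma Cop_rep:
  assumes hb: "bhyp b" and b0: "b 0 = 0" and cphi: "coeffs \<phi> = b" and cf: "coeffs f = a"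
    and sa: "summable (\<lambda>n. (norm (a n))^2)"
  shows "ps_rep (Cop \<phi> f) (Cc b a)"
  unfolding ps_rep_def
proof (intro ballI conjI)
  fix q assume qB: "q \<in> qball"
  then have q: "norm q < 1" by (simp add: qball_iff)
  define K where "K = sqrt (\<Sum>n. (norm (a n))^2)"
  have K: "norm (a n) \<le> K" for n unfolding K_def by (rule l2_bound[OF sa])
  define F where "F n m = qmul (qpow q m) (qmul (spow b n m) (a n))" for n m
  have bnd: "norm (F n m) \<le> K * sqrt (norm q) ^ n * sqrt (norm q) ^ m" for n m
    unfolding F_def by (rule tri_bound(1)[OF q hb b0 K])
  note fb = fubini_geo[OF bnd]
  have s0: "0 \<le> sqrt (norm q)" "sqrt (norm q) < 1" using q by auto
  have inner: "qmul (ps (spow b n) q) (a n) = (\<Sum>m. F n m)" for n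
  proof -
    have "summable (\<lambda>m. qmul (qpow q m) (spow b n m))"
    proof (rule summable_norm_cancel, rule summable_comparison_test'[where g="\<lambda>m. norm q ^ m"])
      show "summable (\<lambda>m. norm q ^ m)" using q by (intro summable_geometric) auto
      show "norm (norm (qmul (qpow q m) (spow b n m))) \<le> norm q ^ m" for m
        using spow_bound[OF hb, of n m] by (simp add: qmul_norm qpow_norm mult_left_le)
    qed
    then show ?thesis unfolding ps_def F_def
      by (simp add: bounded_linear.suminf[OF bl_qmul_left] qmul_assoc)
  qed
  have col: "(\<Sum>n. F n m) = qmul (qpow q m) (Cc b a m)" for m
  proof -
    have "(\<Sum>n. F n m) = (\<Sum>n\<le>m. F n m)"
      by (rule suminf_finite) (auto simp: F_def spow_low[of b, OF b0])
    then show ?thesis by (simp add: F_def Cc_def qmul_sum_right)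
  qed
  have "Cop \<phi> f q = (\<Sum>n. \<Sum>m. F n m)"
    unfolding Cop_def cphi cf by (simp add: inner)
  also have "\<dots> = (\<Sum>m. \<Sum>n. F n m)" by (rule fb(5)[OF s0])
  also have "\<dots> = ps (Cc b a) q" unfolding ps_def by (simp add: col)
  finally show "Cop \<phi> f q = ps (Cc b a) q" .
  show "summable (\<lambda>n. qmul (qpow q n) (Cc b a n))"
    using summable_norm_cancel[OF fb(4)[OF s0]] by (simp add: col)
qed

lemma Dop_rep:
  assumes hb: "bhyp b" and b0: "b 0 = 0" and cphi: "coeffs \<phi> = b" and cf: "coeffs f = a"
    and sa: "summable (\<lambda>n. (norm (a n))^2)"
  shows "ps_rep (Dop \<phi> f) (Dc b a)"
  unfolding ps_rep_def
proof (intro ballI conjI)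
  fix q assume qB: "q \<in> qball"
  then have q: "norm q < 1" by (simp add: qball_iff)
  define K where "K = sqrt (\<Sum>n. (norm (a n))^2)"
  have K: "norm (a n) \<le> K" for n unfolding K_def by (rule l2_bound[OF sa])
  define F where "F n m = qmul (qpow q m) (qmul (a n) (spow b n m))" for n m
  have bnd: "norm (F n m) \<le> K * sqrt (norm q) ^ n * sqrt (norm q) ^ m" for n m
    unfolding F_def by (rule tri_bound(2)[OF q hb b0 K])
  note fb = fubini_geo[OF bnd]
  have s0: "0 \<le> sqrt (norm q)" "sqrt (norm q) < 1" using q by auto
  have col: "(\<Sum>n. F n m) = qmul (qpow q m) (Dc b a m)" for m
  proof -
    have "(\<Sum>n. F n m) = (\<Sum>n\<le>m. F n m)"
      by (rule suminf_finite) (auto simp: F_def spow_low[of b, OF b0])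
    then show ?thesis by (simp add: F_def Dc_def qmul_sum_right)
  qed
  have "Dop \<phi> f q = (\<Sum>n. \<Sum>m. F n m)"
    unfolding Dop_def cphi cf ps_def F_def by simp
  also have "\<dots> = (\<Sum>m. \<Sum>n. F n m)" by (rule fb(5)[OF s0])
  also have "\<dots> = ps (Dc b a) q" unfolding ps_def by (simp add: col)
  finally show "Dop \<phi> f q = ps (Dc b a) q" .
  show "summable (\<lambda>n. qmul (qpow q n) (Dc b a n))"
    using summable_norm_cancel[OF fb(4)[OF s0]] by (simp add: col)
qed

lemma qpow0: "n > 0 \<Longrightarrow> qpow 0 n = 0" by (cases n) simp_all

lemma ps_at0: "ps b 0 = b 0"
proof -
  have "ps b 0 = (\<Sum>n\<in>{0}. qmul (qpow 0 n) (b n))"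
    unfolding ps_def by (rule suminf_finite) (auto simp: qpow0)
  then show ?thesis by simp
qed

lemma H2_bound:
  assumes sa: "summable (\<lambda>n. (norm (a n))^2)"
    and le: "\<And>N. (\<Sum>m<N. (norm (c m))^2) \<le> (\<Sum>n<N. (norm (a n))^2)"
  shows "summable (\<lambda>n. (norm (c n))^2)" and "(\<Sum>n. (norm (c n))^2) \<le> (\<Sum>n. (norm (a n))^2)"
proof -
  have b: "(\<Sum>m<N. (norm (c m))^2) \<le> (\<Sum>n. (norm (a n))^2)" for N
    using le[of N] sum_le_suminf[OF sa, of "{..<N}"] by simp
  show sc: "summable (\<lambda>n. (norm (c n))^2)" by (rule summableI_nonneg_bounded[OF _ b]) simp
  show "(\<Sum>n. (norm (c n))^2) \<le> (\<Sum>n. (norm (a n))^2)" by (rule suminf_le_const[OF sc b])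
qed

definition e1 :: "nat \<Rightarrow> quat" where "e1 n = (if n = 0 then qone else 0)"

lemma ps_e1: "ps e1 q = qone"
proof -
  have "ps e1 q = (\<Sum>n\<in>{0}. qmul (qpow q n) (e1 n))"
    unfolding ps_def by (rule suminf_finite) (auto simp: e1_def)
  then show ?thesis by (simp add: e1_def)
qed

lemma rep_e1: "ps_rep (\<lambda>q. qone) e1"
proof -
  have "summable (\<lambda>n. qmul (qpow q n) (e1 n))" for q
    by (rule summable_finite[of "{0}"]) (auto simp: e1_def)
  then show ?thesis unfolding ps_rep_def by (simp add: ps_e1)
qed

lemma in_H2_one: "in_H2 (\<lambda>q. qone)" and H2norm_one: "H2norm (\<lambda>q. qone) = 1"
proof -
  have c: "coeffs (\<lambda>q. qone) = e1" by (rule coeffs_eq[OF rep_e1])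
  have s: "(\<Sum>n. (norm (e1 n))^2) = (\<Sum>n\<in>{0}. (norm (e1 n))^2)"
    by (rule suminf_finite) (auto simp: e1_def)
  show "in_H2 (\<lambda>q. qone)" unfolding in_H2_def regular_B_def c
  proof (intro conjI exI[of _ e1] rep_e1)
    show "summable (\<lambda>n. (norm (e1 n))^2)" by (rule summable_finite[of "{0}"]) (auto simp: e1_def)
  qed
  show "H2norm (\<lambda>q. qone) = 1" unfolding H2norm_def c s by (simp add: e1_def)
qed

theorem mainTheorem2:
  fixes \<phi> :: "quat \<Rightarrow> quat"
  assumes "regular_B \<phi>"
    and "\<forall>q\<in>qball. \<phi> q \<in> qball"
    and "\<phi> 0 = 0"
  shows "bounded_H2 (Cop \<phi>) \<and> bounded_H2 (Dop \<phi>)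
         \<and> opnorm_H2 (Cop \<phi>) = 1 \<and> opnorm_H2 (Dop \<phi>) = 1"
proof -
  define b where "b = coeffs \<phi>"
  have rep: "ps_rep \<phi> b" using assms(1) unfolding regular_B_def b_def coeffs_def by (rule someI_ex)
  have hb: "bhyp b" unfolding bhyp_def
  proof
    fix q assume q: "q \<in> qball"
    then have "summable (\<lambda>n. qmul (qpow q n) (b n)) \<and> \<phi> q = ps b q" using rep unfolding ps_rep_def by blast
    moreover have "\<phi> q \<in> qball" using assms(2) q by blast
    ultimately show "summable (\<lambda>n. qmul (qpow q n) (b n)) \<and> norm (ps b q) < 1"
      by (auto simp: qball_iff)
  qed
  have b0: "b 0 = 0"
  proof -
    have "(0::quat) \<in> qball" by (simp add: qball_iff)
    then have "\<phi> 0 = ps b 0" using rep unfolding ps_rep_def by blast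
    then show ?thesis using assms(3) ps_at0 by simp
  qed
  have C: "in_H2 (Cop \<phi> f) \<and> H2norm (Cop \<phi> f) \<le> H2norm f" if f: "in_H2 f" for f
  proof -
    define a where "a = coeffs f"
    have sa: "summable (\<lambda>n. (norm (a n))^2)" using f by (simp add: in_H2_def a_def)
    have r: "ps_rep (Cop \<phi> f) (Cc b a)" by (rule Cop_rep[OF hb b0 b_def[symmetric] a_def[symmetric] sa])
    have c: "coeffs (Cop \<phi> f) = Cc b a" by (rule coeffs_eq[OF r])
    note hh = H2_bound[OF sa Cc_l2[OF hb b0]]
    show ?thesis unfolding in_H2_def H2norm_def regular_B_def c a_def[symmetric]
      using r hh by (auto intro: real_sqrt_le_mono)
  qed
  have D: "in_H2 (Dop \<phi> f) \<and> H2norm (Dop \<phi> f) \<le> H2norm f" if f: "in_H2 f" for f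
  proof -
    define a where "a = coeffs f"
    have sa: "summable (\<lambda>n. (norm (a n))^2)" using f by (simp add: in_H2_def a_def)
    have r: "ps_rep (Dop \<phi> f) (Dc b a)" by (rule Dop_rep[OF hb b0 b_def[symmetric] a_def[symmetric] sa])
    have c: "coeffs (Dop \<phi> f) = Dc b a" by (rule coeffs_eq[OF r])
    note hh = H2_bound[OF sa Dc_l2[OF hb b0]]
    show ?thesis unfolding in_H2_def H2norm_def regular_B_def c a_def[symmetric]
      using r hh by (auto intro: real_sqrt_le_mono)
  qed
  have C1: "Cop \<phi> (\<lambda>q. qone) = (\<lambda>q. qone)"
  proof
    fix q
    have c: "coeffs (\<lambda>q. qone) = e1" by (rule coeffs_eq[OF rep_e1])
    have "Cop \<phi> (\<lambda>q. qone) q = (\<Sum>n\<in>{0}. qmul (ps (spow b n) q) (e1 n))"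
      unfolding Cop_def c b_def[symmetric] by (rule suminf_finite) (auto simp: e1_def)
    also have "\<dots> = ps e1 q" by (simp add: e1_def[abs_def])
    finally show "Cop \<phi> (\<lambda>q. qone) q = qone" by (simp add: ps_e1)
  qed
  have D1: "Dop \<phi> (\<lambda>q. qone) = (\<lambda>q. qone)"
  proof
    fix q
    have c: "coeffs (\<lambda>q. qone) = e1" by (rule coeffs_eq[OF rep_e1])
    have "Dop \<phi> (\<lambda>q. qone) q = (\<Sum>n\<in>{0}. ps (\<lambda>m. qmul (e1 n) (spow b n m)) q)"
      unfolding Dop_def c b_def[symmetric] by (rule suminf_finite) (auto simp: e1_def ps_def)
    also have "\<dots> = ps e1 q" by (simp add: e1_def[abs_def])
    finally show "Dop \<phi> (\<lambda>q. qone) q = qone" by (simp add: ps_e1)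
  qed
  have opn: "opnorm_H2 T = 1"
    if T: "\<And>f. in_H2 f \<Longrightarrow> in_H2 (T f) \<and> H2norm (T f) \<le> H2norm f" and T1: "T (\<lambda>q. qone) = (\<lambda>q. qone)"
    for T
    unfolding opnorm_H2_def
  proof (rule cSup_eq_maximum)
    show "1 \<in> {H2norm (T f) |f. in_H2 f \<and> H2norm f \<le> 1}"
      using in_H2_one H2norm_one T1 by (auto intro!: exI[of _ "\<lambda>q. qone"])
    show "x \<le> 1" if "x \<in> {H2norm (T f) |f. in_H2 f \<and> H2norm f \<le> 1}" for x
      using that T by force
  qed
  have bC: "bounded_H2 (Cop \<phi>)" unfolding bounded_H2_def using C by (auto intro!: exI[of _ 1])
  have bD: "bounded_H2 (Dop \<phi>)" unfolding bounded_H2_def using D by (auto intro!: exI[of _ 1])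
  show ?thesis using bC bD opn[OF C C1] opn[OF D D1] by blast
qed

end
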